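(* Let $\mathcal{D}$ be a set of discounting functions and let $\varphi$ be an $\mathrm{LTL}^{\mathrm{disc}}[\mathcal{D}]$ formula. Then there exist LTL formulas $\varphi_{>0}$ and $\varphi_{<1}$ such that $|\varphi_{>0}|$ and $|\varphi_{<1}|$ are both $O(|\varphi|)$ and the following hold for every computation $\pi$: (1) if $[\![\pi,\varphi]\!]>0$ then $\pi\models\varphi_{>0}$, and if $[\![\pi,\varphi]\!]<1$ then $\pi\models\varphi_{<1}$; (2) if $\pi$ is a lasso computation, then $\pi\models\varphi_{>0}$ implies $[\![\pi,\varphi]\!]>0$, and $\pi\models\varphi_{<1}$ implies $[\![\pi,\varphi]\!]<1$.
   Context: Let $AP$ be a finite set of atomic propositions. A computation is an infinite word $\pi=\pi_0\pi_1\pi_2\cdots\in(2^{AP})^\omega$, and $\pi^i=\pi_i\pi_{i+1}\cdots$ denotes its suffix from position $i$. A lasso computation is a computation of the form $u\cdot v^\omega$ with $u,v\in(2^{AP})^*$ and $v\neq\epsilon$. A discounting function is a strictly decreasing function $\eta:\mathbb{N}\to[0,1]$ (where $\mathbb{N}=\{0,1,\dots\}$) with $\lim_{i\to\infty}\eta(i)=0$. For a set $\mathcal{D}$ of discounting functions, the formulas of $\mathrm{LTL}^{\mathrm{disc}}[\mathcal{D}]$ are given by the grammar $\varphi ::= \mathtt{True}\mid p\mid\neg\varphi\mid\varphi\vee\varphi\mid\mathsf{X}\varphi\mid\varphi\,\mathsf{U}\,\varphi\mid\varphi\,\mathsf{U}_\eta\,\varphi$ with $p\in AP$, $\eta\in\mathcal{D}$.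 The satisfaction value $[\![\pi,\varphi]\!]\in[0,1]$ is defined inductively: $[\![\pi,\mathtt{True}]\!]=1$; $[\![\pi,p]\!]=1$ if $p\in\pi_0$ and $0$ otherwise; $[\![\pi,\neg\varphi]\!]=1-[\![\pi,\varphi]\!]$; $[\![\pi,\varphi\vee\psi]\!]=\max\{[\![\pi,\varphi]\!],[\![\pi,\psi]\!]\}$; $[\![\pi,\mathsf{X}\varphi]\!]=[\![\pi^1,\varphi]\!]$; $[\![\pi,\varphi\,\mathsf{U}\,\psi]\!]=\sup_{i\ge0}\min\{[\![\pi^i,\psi]\!],\min_{0\le j<i}[\![\pi^j,\varphi]\!]\}$; $[\![\pi,\varphi\,\mathsf{U}_\eta\,\psi]\!]=\sup_{i\ge0}\min\{\eta(i)[\![\pi^i,\psi]\!],\min_{0\le j<i}\eta(j)[\![\pi^j,\varphi]\!]\}$. An LTL formula is a formula without $\mathsf{U}_\eta$ operators; its value is always in $\{0,1\}$, and $\pi\models\psi$ means $[\![\pi,\psi]\!]=1$ (standard LTL satisfaction). $|\varphi|$ denotes the number of subformulas of $\varphi$. *)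

theory Defs
  imports Complex_Main
begin

datatype 'a ltld =
    TT
  | Prop 'a
  | Neg "'a ltld"
  | Or "'a ltld" "'a ltld"
  | Next "'a ltld"
  | Until "'a ltld" "'a ltld"
  | UntilD "nat \<Rightarrow> real" "'a ltld" "'a ltld"

type_synonym 'a computation = "nat \<Rightarrow> 'a set"

definition suffix :: "nat \<Rightarrow> 'a computation \<Rightarrow> 'a computation" where
  "suffix i \<pi> = (\<lambda>n. \<pi> (i + n))"

definition discounting :: "(nat \<Rightarrow> real) \<Rightarrow> bool" where
  "discounting \<eta> \<longleftrightarrow> (\<forall>i j. i < j \<longrightarrow> \<eta> j < \<eta> i) \<and> (\<forall>i. 0 \<le> \<eta> i \<and> \<eta> i \<le> 1)
      \<and> \<eta> \<longlonglongrightarrow> 0"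

text \<open>Minimum over j < i with the empty minimum equal to 1 (all values lie in [0,1]).\<close>
definition min_below :: "nat \<Rightarrow> (nat \<Rightarrow> real) \<Rightarrow> real" where
  "min_below i f = Min (insert 1 (f ` {..<i}))"

primrec val :: "'a ltld \<Rightarrow> 'a computation \<Rightarrow> real" where
  "val TT \<pi> = 1"
| "val (Prop p) \<pi> = (if p \<in> \<pi> 0 then 1 else 0)"
| "val (Neg \<phi>) \<pi> = 1 - val \<phi> \<pi>"
| "val (Or \<phi> \<psi>) \<pi> = max (val \<phi> \<pi>) (val \<psi> \<pi>)"
| "val (Next \<phi>) \<pi> = val \<phi> (suffix 1 \<pi>)"
| "val (Until \<phi> \<psi>) \<pi> =
     (SUP i. min (val \<psi> (suffix i \<pi>)) (min_below i (\<lambda>j. val \<phi> (suffix j \<pi>))))"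
| "val (UntilD \<eta> \<phi> \<psi>) \<pi> =
     (SUP i. min (\<eta> i * val \<psi> (suffix i \<pi>)) (min_below i (\<lambda>j. \<eta> j * val \<phi> (suffix j \<pi>))))"

definition models :: "'a computation \<Rightarrow> 'a ltld \<Rightarrow> bool" where
  "models \<pi> \<phi> \<longleftrightarrow> val \<phi> \<pi> = 1"

primrec disc_funs :: "'a ltld \<Rightarrow> (nat \<Rightarrow> real) set" where
  "disc_funs TT = {}"
| "disc_funs (Prop p) = {}"
| "disc_funs (Neg \<phi>) = disc_funs \<phi>"
| "disc_funs (Or \<phi> \<psi>) = disc_funs \<phi> \<union> disc_funs \<psi>"
| "disc_funs (Next \<phi>) = disc_funs \<phi>"
| "disc_funs (Until \<phi> \<psi>) = disc_funs \<phi> \<union> disc_funs \<psi>"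
| "disc_funs (UntilD \<eta> \<phi> \<psi>) = insert \<eta> (disc_funs \<phi> \<union> disc_funs \<psi>)"

definition is_ltld_over :: "(nat \<Rightarrow> real) set \<Rightarrow> 'a ltld \<Rightarrow> bool" where
  "is_ltld_over D \<phi> \<longleftrightarrow> disc_funs \<phi> \<subseteq> D"

definition is_ltl :: "'a ltld \<Rightarrow> bool" where
  "is_ltl \<phi> \<longleftrightarrow> disc_funs \<phi> = {}"

primrec subformulas :: "'a ltld \<Rightarrow> 'a ltld set" where
  "subformulas TT = {TT}"
| "subformulas (Prop p) = {Prop p}"
| "subformulas (Neg \<phi>) = insert (Neg \<phi>) (subformulas \<phi>)"
| "subformulas (Or \<phi> \<psi>) = insert (Or \<phi> \<psi>) (subformulas \<phi> \<union> subformulas \<psi>)"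
| "subformulas (Next \<phi>) = insert (Next \<phi>) (subformulas \<phi>)"
| "subformulas (Until \<phi> \<psi>) = insert (Until \<phi> \<psi>) (subformulas \<phi> \<union> subformulas \<psi>)"
| "subformulas (UntilD \<eta> \<phi> \<psi>) = insert (UntilD \<eta> \<phi> \<psi>) (subformulas \<phi> \<union> subformulas \<psi>)"

definition fsize :: "'a ltld \<Rightarrow> nat" where
  "fsize \<phi> = card (subformulas \<phi>)"

text \<open>Lasso computation u v^omega with v nonempty.\<close>
definition lasso :: "'a computation \<Rightarrow> bool" where
  "lasso \<pi> \<longleftrightarrow> (\<exists>u v. v \<noteq> [] \<and>
     (\<forall>n. \<pi> n = (if n < length u then u ! n else v ! ((n - length u) mod length v))))"

end

theory Submission
  imports Defs
begin

fun pos :: "'a ltld \<Rightarrow> 'a ltld" and lt1 :: "'a ltld \<Rightarrow> 'a ltld" where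
  "pos TT = TT"
| "pos (Prop p) = Prop p"
| "pos (Neg a) = lt1 a"
| "pos (Or a b) = Or (pos a) (pos b)"
| "pos (Next a) = Next (pos a)"
| "pos (Until a b) = Until (pos a) (pos b)"
| "pos (UntilD \<eta> a b) = Until (pos a) (pos b)"
| "lt1 TT = Neg TT"
| "lt1 (Prop p) = Neg (Prop p)"
| "lt1 (Neg a) = pos a"
| "lt1 (Or a b) = Neg (Or (Neg (lt1 a)) (Neg (lt1 b)))"
| "lt1 (Next a) = Next (lt1 a)"
| "lt1 (Until a b) = Neg (Until (Neg (lt1 a)) (Neg (lt1 b)))"
| "lt1 (UntilD \<eta> a b) = (if \<eta> 0 = 1 then lt1 b else TT)"

fun aux :: "'a ltld \<Rightarrow> 'a ltld" where
  "aux (Or a b) = Or (Neg (lt1 a)) (Neg (lt1 b))"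
| "aux (Until a b) = Until (Neg (lt1 a)) (Neg (lt1 b))"
| "aux _ = TT"

definition loc :: "'a ltld \<Rightarrow> 'a ltld set" where
  "loc \<chi> = set [pos \<chi>, lt1 \<chi>, Neg (lt1 \<chi>), TT, Neg TT, aux \<chi>]"

definition S :: "'a ltld \<Rightarrow> 'a ltld set" where
  "S \<phi> = (\<Union>\<chi>\<in>subformulas \<phi>. loc \<chi>)"

lemma sub_self: "\<phi> \<in> subformulas \<phi>" by (cases \<phi>) auto
lemma finite_sub: "finite (subformulas \<phi>)" by (induction \<phi>) auto

lemma S_mono: "subformulas a \<subseteq> subformulas b \<Longrightarrow> S a \<subseteq> S b"
  unfolding S_def by blast

lemma loc_S: "\<chi> \<in> subformulas \<phi> \<Longrightarrow> loc \<chi> \<subseteq> S \<phi>"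
  unfolding S_def by blast

lemma sub_pos_lt1: "subformulas (pos \<phi>) \<subseteq> S \<phi> \<and> subformulas (lt1 \<phi>) \<subseteq> S \<phi>"
proof (induction \<phi>)
  case TT
  then show ?case using loc_S[OF sub_self, of TT] by (auto simp: loc_def)
next
  case (Prop x)
  then show ?case using loc_S[OF sub_self, of "Prop x"] by (auto simp: loc_def)
next
  case (Neg \<phi>)
  have "S \<phi> \<subseteq> S (Neg \<phi>)" by (rule S_mono) auto
  then show ?case using Neg by auto
next
  case (Or \<phi>1 \<phi>2)
  have s1: "S \<phi>1 \<subseteq> S (Or \<phi>1 \<phi>2)" by (rule S_mono) auto
  have s2: "S \<phi>2 \<subseteq> S (Or \<phi>1 \<phi>2)" by (rule S_mono) auto
  have l: "loc (Or \<phi>1 \<phi>2) \<subseteq> S (Or \<phi>1 \<phi>2)" by (rule loc_S[OF sub_self])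
  have l1: "loc \<phi>1 \<subseteq> S (Or \<phi>1 \<phi>2)" using loc_S[OF sub_self, of \<phi>1] s1 by blast
  have l2: "loc \<phi>2 \<subseteq> S (Or \<phi>1 \<phi>2)" using loc_S[OF sub_self, of \<phi>2] s2 by blast
  show ?case using Or s1 s2 l l1 l2 by (auto simp: loc_def)
next
  case (Next \<phi>)
  have s: "S \<phi> \<subseteq> S (Next \<phi>)" by (rule S_mono) auto
  have l: "loc (Next \<phi>) \<subseteq> S (Next \<phi>)" by (rule loc_S[OF sub_self])
  show ?case using Next s l by (auto simp: loc_def)
next
  case (Until \<phi>1 \<phi>2)
  have s1: "S \<phi>1 \<subseteq> S (Until \<phi>1 \<phi>2)" by (rule S_mono) auto
  have s2: "S \<phi>2 \<subseteq> S (Until \<phi>1 \<phi>2)" by (rule S_mono) auto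
  have l: "loc (Until \<phi>1 \<phi>2) \<subseteq> S (Until \<phi>1 \<phi>2)" by (rule loc_S[OF sub_self])
  have l1: "loc \<phi>1 \<subseteq> S (Until \<phi>1 \<phi>2)" using loc_S[OF sub_self, of \<phi>1] s1 by blast
  have l2: "loc \<phi>2 \<subseteq> S (Until \<phi>1 \<phi>2)" using loc_S[OF sub_self, of \<phi>2] s2 by blast
  show ?case using Until s1 s2 l l1 l2 by (auto simp: loc_def)
next
  case (UntilD \<eta> \<phi>1 \<phi>2)
  have s1: "S \<phi>1 \<subseteq> S (UntilD \<eta> \<phi>1 \<phi>2)" by (rule S_mono) auto
  have s2: "S \<phi>2 \<subseteq> S (UntilD \<eta> \<phi>1 \<phi>2)" by (rule S_mono) auto
  have l: "loc (UntilD \<eta> \<phi>1 \<phi>2) \<subseteq> S (UntilD \<eta> \<phi>1 \<phi>2)" by (rule loc_S[OF sub_self])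
  show ?case using UntilD s1 s2 l by (auto simp: loc_def)
qed

lemma card_S: "card (S \<phi>) \<le> 6 * card (subformulas \<phi>)"
proof -
  have "card (S \<phi>) \<le> (\<Sum>\<chi>\<in>subformulas \<phi>. card (loc \<chi>))"
    unfolding S_def by (rule card_UN_le[OF finite_sub])
  also have "\<dots> \<le> (\<Sum>\<chi>\<in>subformulas \<phi>. 6)"
  proof (rule sum_mono)
    fix \<chi> show "card (loc \<chi>) \<le> 6" unfolding loc_def
      using card_length[of "[pos \<chi>, lt1 \<chi>, Neg (lt1 \<chi>), TT, Neg TT, aux \<chi>]"] by simp
  qed
  also have "\<dots> = 6 * card (subformulas \<phi>)" by simp
  finally show ?thesis .
qed

lemma finite_S: "finite (S \<phi>)"
  unfolding S_def loc_def using finite_sub by auto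

lemma size_pos: "fsize (pos \<phi>) \<le> 6 * fsize \<phi>" "fsize (lt1 \<phi>) \<le> 6 * fsize \<phi>"
  unfolding fsize_def using card_mono[OF finite_S] sub_pos_lt1 card_S
  by (meson order_trans)+

lemma ltl_pos: "disc_funs (pos \<phi>) = {} \<and> disc_funs (lt1 \<phi>) = {}"
  by (induction \<phi>) auto


lemma suffix_0[simp]: "suffix 0 \<pi> = \<pi>" by (simp add: suffix_def)
lemma suffix_suffix[simp]: "suffix i (suffix j \<pi>) = suffix (j + i) \<pi>"
  by (simp add: suffix_def add.assoc)

definition fs :: "'a computation \<Rightarrow> bool" where
  "fs \<pi> \<longleftrightarrow> finite (range (\<lambda>i. suffix i \<pi>))"

lemma fs_suffix: "fs \<pi> \<Longrightarrow> fs (suffix j \<pi>)"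
  unfolding fs_def by (rule finite_subset[of _ "range (\<lambda>i. suffix i \<pi>)"]) auto

lemma mb_0[simp]: "min_below 0 f = 1" by (simp add: min_below_def)
lemma mb_le1: "min_below i f \<le> 1" by (simp add: min_below_def)
lemma mb_le: "j < i \<Longrightarrow> min_below i f \<le> f j" by (simp add: min_below_def)
lemma mb_ge0: "(\<And>j. 0 \<le> f j) \<Longrightarrow> 0 \<le> min_below i f" by (simp add: min_below_def)
lemma mb_pos: "min_below i f > 0 \<longleftrightarrow> (\<forall>j<i. f j > 0)" by (auto simp add: min_below_def)
lemma mb_one: "(\<And>j. f j \<le> 1) \<Longrightarrow> min_below i f = 1 \<longleftrightarrow> (\<forall>j<i. f j = 1)"
proof
  assume h: "\<And>j. f j \<le> 1" and m: "min_below i f = 1"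
  show "\<forall>j<i. f j = 1"
  proof (intro allI impI)
    fix j assume "j < i"
    then have "min_below i f \<le> f j" by (rule mb_le)
    then show "f j = 1" using h[of j] m by linarith
  qed
next
  assume "\<forall>j<i. f j = 1"
  then have e: "insert 1 (f ` {..<i}) = {1}" by auto
  show "min_below i f = 1" unfolding min_below_def e by simp
qed
lemma mb_in: "min_below i f \<in> insert 1 (range f)"
proof -
  have "Min (insert 1 (f ` {..<i})) \<in> insert 1 (f ` {..<i})" by (rule Min_in) auto
  then show ?thesis unfolding min_below_def by auto
qed

lemma sup_upper: "(\<And>i. f i \<le> (B::real)) \<Longrightarrow> f i \<le> (SUP i. f i)"
  by (rule cSUP_upper) (auto intro: bdd_aboveI2[where M=B])
lemma sup_least: "(\<And>i. f i \<le> (B::real)) \<Longrightarrow> (SUP i. f i) \<le> B"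
  by (rule cSUP_least) auto
lemma sup_attained: "finite (range (f::nat \<Rightarrow> real)) \<Longrightarrow> \<exists>i. (SUP i. f i) = f i"
proof -
  assume "finite (range f)"
  then have "Sup (range f) = Max (range f)" by (rule cSup_eq_Max) auto
  moreover have "Max (range f) \<in> range f" using \<open>finite (range f)\<close> by (rule Max_in) auto
  ultimately show ?thesis by auto
qed

lemma disc_pos: assumes "discounting \<eta>" shows "\<eta> i > 0"
proof -
  have "\<eta> (Suc i) < \<eta> i" "0 \<le> \<eta> (Suc i)" using assms unfolding discounting_def by auto
  then show ?thesis by linarith
qed
lemma disc_le1: "discounting \<eta> \<Longrightarrow> \<eta> i \<le> 1"
  unfolding discounting_def by blast
lemma disc_mono: assumes "discounting \<eta>" "i \<le> j" shows "\<eta> j \<le> \<eta> i"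
proof (cases "i = j")
  case False then have "i < j" using assms(2) by simp
  then have "\<eta> j < \<eta> i" using assms(1) unfolding discounting_def by blast
  then show ?thesis by simp
qed simp
lemma disc_01: "discounting \<eta> \<Longrightarrow> \<eta> 1 < \<eta> 0"
  unfolding discounting_def by simp

lemma val_range: "\<forall>\<eta>\<in>disc_funs \<phi>. discounting \<eta> \<Longrightarrow> 0 \<le> val \<phi> \<pi> \<and> val \<phi> \<pi> \<le> 1"
proof (induction \<phi> arbitrary: \<pi>)
  case (Until a b)
  let ?t = "\<lambda>i. min (val b (suffix i \<pi>)) (min_below i (\<lambda>j. val a (suffix j \<pi>)))"
  have b: "\<And>i. 0 \<le> ?t i \<and> ?t i \<le> 1" using Until by (auto intro!: mb_ge0 simp: min_le_iff_disj)
  have "?t 0 \<le> (SUP i. ?t i)" by (rule sup_upper[of _ 1]) (use b in auto)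
  moreover have "(SUP i. ?t i) \<le> 1" by (rule sup_least) (use b in auto)
  ultimately show ?case using b[of 0] by simp
next
  case (UntilD \<eta> a b)
  have d: "discounting \<eta>" using UntilD.prems by simp
  let ?t = "\<lambda>i. min (\<eta> i * val b (suffix i \<pi>)) (min_below i (\<lambda>j. \<eta> j * val a (suffix j \<pi>)))"
  have "\<And>i. 0 \<le> \<eta> i \<and> \<eta> i \<le> 1" using disc_pos[OF d] disc_le1[OF d] less_imp_le by blast
  then have b: "\<And>i. 0 \<le> ?t i \<and> ?t i \<le> 1" using UntilD
    by (auto intro!: mb_ge0 mult_le_one simp: min_le_iff_disj)
  have "?t 0 \<le> (SUP i. ?t i)" by (rule sup_upper[of _ 1]) (use b in auto)
  moreover have "(SUP i. ?t i) \<le> 1" by (rule sup_least) (use b in auto)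
  ultimately show ?case using b[of 0] by simp
qed (auto simp: le_max_iff_disj)


lemma ltl01: "is_ltl \<phi> \<Longrightarrow> val \<phi> \<pi> = 0 \<or> val \<phi> \<pi> = 1"
proof (induction \<phi> arbitrary: \<pi>)
  case (Until a b)
  let ?t = "\<lambda>i. min (val b (suffix i \<pi>)) (min_below i (\<lambda>j. val a (suffix j \<pi>)))"
  have va: "\<And>\<pi>. val a \<pi> \<in> {0,1}" and vb: "\<And>\<pi>. val b \<pi> \<in> {0,1}"
    using Until by (auto simp: is_ltl_def)
  have "\<And>i. ?t i \<in> {0,1}"
  proof -
    fix i
    have m: "min_below i (\<lambda>j. val a (suffix j \<pi>)) \<in> insert 1 (range (\<lambda>j. val a (suffix j \<pi>)))" by (rule mb_in)
    have "range (\<lambda>j. val a (suffix j \<pi>)) \<subseteq> {0,1}" using va by blast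
    then have "min_below i (\<lambda>j. val a (suffix j \<pi>)) \<in> {0,1}" using m by blast
    then show "?t i \<in> {0,1}" using vb[of "suffix i \<pi>"] by auto
  qed
  then have r: "range ?t \<subseteq> {0,1}" by auto
  then have "finite (range ?t)" by (rule finite_subset) auto
  then obtain i where "(SUP i. ?t i) = ?t i" using sup_attained by blast
  then show ?case using r by auto
next
  case (UntilD \<eta> a b)
  then show ?case by (simp add: is_ltl_def)
next
  case (Or a b)
  then have "val a \<pi> = 0 \<or> val a \<pi> = 1" "val b \<pi> = 0 \<or> val b \<pi> = 1" by (auto simp: is_ltl_def)
  then show ?case by (auto simp: max_def)
qed (auto simp: is_ltl_def)

lemma val_le1_ltl: "is_ltl \<phi> \<Longrightarrow> val \<phi> \<pi> \<le> 1"
  using ltl01[of \<phi> \<pi>] by auto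

lemma models_TT[simp]: "models \<pi> TT" by (simp add: models_def)
lemma models_Neg: "is_ltl \<chi> \<Longrightarrow> models \<pi> (Neg \<chi>) \<longleftrightarrow> \<not> models \<pi> \<chi>"
  using ltl01[of \<chi> \<pi>] by (auto simp: models_def)
lemma models_Or: "is_ltl a \<Longrightarrow> is_ltl b \<Longrightarrow> models \<pi> (Or a b) \<longleftrightarrow> models \<pi> a \<or> models \<pi> b"
  using ltl01[of a \<pi>] ltl01[of b \<pi>] by (auto simp: models_def)
lemma models_Next: "models \<pi> (Next a) \<longleftrightarrow> models (suffix 1 \<pi>) a"
  by (simp add: models_def)
lemma models_Prop: "models \<pi> (Prop p) \<longleftrightarrow> p \<in> \<pi> 0"
  by (simp add: models_def)

lemma models_Until: "is_ltl a \<Longrightarrow> is_ltl b \<Longrightarrow> models \<pi> (Until a b) \<longleftrightarrow>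
   (\<exists>i. models (suffix i \<pi>) b \<and> (\<forall>j<i. models (suffix j \<pi>) a))"
proof -
  assume la: "is_ltl a" and lb: "is_ltl b"
  let ?t = "\<lambda>i. min (val b (suffix i \<pi>)) (min_below i (\<lambda>j. val a (suffix j \<pi>)))"
  have va: "\<And>\<pi>. val a \<pi> \<in> {0,1}" and vb: "\<And>\<pi>. val b \<pi> \<in> {0,1}"
    using ltl01 la lb by auto
  have t01: "\<And>i. ?t i \<in> {0,1}"
  proof -
    fix i
    have m: "min_below i (\<lambda>j. val a (suffix j \<pi>)) \<in> insert 1 (range (\<lambda>j. val a (suffix j \<pi>)))" by (rule mb_in)
    have "range (\<lambda>j. val a (suffix j \<pi>)) \<subseteq> {0,1}" using va by blast
    then have "min_below i (\<lambda>j. val a (suffix j \<pi>)) \<in> {0,1}" using m by blast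
    then show "?t i \<in> {0,1}" using vb[of "suffix i \<pi>"] by auto
  qed
  then have r: "range ?t \<subseteq> {0,1}" by auto
  then have "finite (range ?t)" by (rule finite_subset) auto
  then obtain i0 where i0: "(SUP i. ?t i) = ?t i0" using sup_attained by blast
  have tle: "\<And>i. ?t i \<le> 1"
  proof - fix i show "?t i \<le> 1" using t01[of i] by auto qed
  have key: "\<And>i. ?t i = 1 \<longleftrightarrow> models (suffix i \<pi>) b \<and> (\<forall>j<i. models (suffix j \<pi>) a)"
  proof -
    fix i
    have ale: "\<And>j. val a (suffix j \<pi>) \<le> 1" using val_le1_ltl[OF la] by blast
    have "?t i = 1 \<longleftrightarrow> val b (suffix i \<pi>) = 1 \<and> min_below i (\<lambda>j. val a (suffix j \<pi>)) = 1"
      using vb[of "suffix i \<pi>"] mb_le1[of i "\<lambda>j. val a (suffix j \<pi>)"] by (auto simp: min_def)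
    also have "\<dots> \<longleftrightarrow> models (suffix i \<pi>) b \<and> (\<forall>j<i. models (suffix j \<pi>) a)"
      using mb_one[of "\<lambda>j. val a (suffix j \<pi>)" i, OF ale] by (simp add: models_def)
    finally show "?t i = 1 \<longleftrightarrow> models (suffix i \<pi>) b \<and> (\<forall>j<i. models (suffix j \<pi>) a)" .
  qed
  show ?thesis
  proof
    assume "models \<pi> (Until a b)"
    then have "?t i0 = 1" using i0 by (simp add: models_def)
    then show "\<exists>i. models (suffix i \<pi>) b \<and> (\<forall>j<i. models (suffix j \<pi>) a)" using key by blast
  next
    assume "\<exists>i. models (suffix i \<pi>) b \<and> (\<forall>j<i. models (suffix j \<pi>) a)"
    then obtain i where "?t i = 1" using key by blast
    moreover have "?t i \<le> (SUP i. ?t i)" by (rule sup_upper[of _ 1]) (use tle in auto)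
    moreover have "(SUP i. ?t i) \<le> 1" by (rule sup_least) (use tle in auto)
    ultimately show "models \<pi> (Until a b)" by (simp add: models_def)
  qed
qed

lemma ltl_pos'[simp]: "is_ltl (pos \<phi>)" "is_ltl (lt1 \<phi>)" "is_ltl TT"
  using ltl_pos[of \<phi>] by (auto simp: is_ltl_def)


lemma fin_terms: "fs \<pi> \<Longrightarrow> finite (range (\<lambda>i. min (f (suffix i \<pi>)) (min_below i (\<lambda>j. g (suffix j \<pi>)))))"
proof -
  assume "fs \<pi>"
  let ?R = "range (\<lambda>i. suffix i \<pi>)"
  have fR: "finite ?R" using \<open>fs \<pi>\<close> by (simp add: fs_def)
  have "range (\<lambda>i. min (f (suffix i \<pi>)) (min_below i (\<lambda>j. g (suffix j \<pi>))))
        \<subseteq> (\<lambda>(x,y). min x y) ` (f ` ?R \<times> insert 1 (g ` ?R))"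
  proof
    fix z assume "z \<in> range (\<lambda>i. min (f (suffix i \<pi>)) (min_below i (\<lambda>j. g (suffix j \<pi>))))"
    then obtain i where z: "z = min (f (suffix i \<pi>)) (min_below i (\<lambda>j. g (suffix j \<pi>)))" by blast
    have m: "min_below i (\<lambda>j. g (suffix j \<pi>)) \<in> insert 1 (range (\<lambda>j. g (suffix j \<pi>)))" by (rule mb_in)
    have "range (\<lambda>j. g (suffix j \<pi>)) = g ` ?R" by auto
    then have m': "min_below i (\<lambda>j. g (suffix j \<pi>)) \<in> insert 1 (g ` ?R)" using m by simp
    have "f (suffix i \<pi>) \<in> f ` ?R" by auto
    then show "z \<in> (\<lambda>(x,y). min x y) ` (f ` ?R \<times> insert 1 (g ` ?R))"
      using m' z by (auto intro!: image_eqI[where x="(f (suffix i \<pi>), min_below i (\<lambda>j. g (suffix j \<pi>)))"])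
  qed
  moreover have "finite ((\<lambda>(x,y). min x y) ` (f ` ?R \<times> insert 1 (g ` ?R)))"
    using fR by auto
  ultimately show ?thesis by (rule finite_subset)
qed

declare ltl_pos'[simp]

lemma main: "\<forall>\<eta>\<in>disc_funs \<phi>. discounting \<eta> \<Longrightarrow>
  (val \<phi> \<pi> > 0 \<longrightarrow> models \<pi> (pos \<phi>)) \<and> (val \<phi> \<pi> < 1 \<longrightarrow> models \<pi> (lt1 \<phi>)) \<and>
  (fs \<pi> \<longrightarrow> (models \<pi> (pos \<phi>) \<longrightarrow> val \<phi> \<pi> > 0) \<and> (models \<pi> (lt1 \<phi>) \<longrightarrow> val \<phi> \<pi> < 1))"
proof (induction \<phi> arbitrary: \<pi>)
  case TT
  then show ?case by (simp add: models_def)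
next
  case (Prop p)
  then show ?case by (simp add: models_def)
next
  case (Neg a)
  then have "(val a \<pi> > 0 \<longrightarrow> models \<pi> (pos a)) \<and> (val a \<pi> < 1 \<longrightarrow> models \<pi> (lt1 a)) \<and>
    (fs \<pi> \<longrightarrow> (models \<pi> (pos a) \<longrightarrow> val a \<pi> > 0) \<and> (models \<pi> (lt1 a) \<longrightarrow> val a \<pi> < 1))" by simp
  then show ?case by auto
next
  case (Or a b)
  then have ha: "(val a \<pi> > 0 \<longrightarrow> models \<pi> (pos a)) \<and> (val a \<pi> < 1 \<longrightarrow> models \<pi> (lt1 a)) \<and>
    (fs \<pi> \<longrightarrow> (models \<pi> (pos a) \<longrightarrow> val a \<pi> > 0) \<and> (models \<pi> (lt1 a) \<longrightarrow> val a \<pi> < 1))"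
    and hb: "(val b \<pi> > 0 \<longrightarrow> models \<pi> (pos b)) \<and> (val b \<pi> < 1 \<longrightarrow> models \<pi> (lt1 b)) \<and>
    (fs \<pi> \<longrightarrow> (models \<pi> (pos b) \<longrightarrow> val b \<pi> > 0) \<and> (models \<pi> (lt1 b) \<longrightarrow> val b \<pi> < 1))" by simp_all
  have e1: "models \<pi> (pos (Or a b)) \<longleftrightarrow> models \<pi> (pos a) \<or> models \<pi> (pos b)"
    by (simp add: models_Or)
  have e2: "models \<pi> (lt1 (Or a b)) \<longleftrightarrow> models \<pi> (lt1 a) \<and> models \<pi> (lt1 b)"
    by (simp add: models_Or models_Neg is_ltl_def ltl_pos)
  show ?case unfolding e1 e2 using ha hb by (auto simp: less_max_iff_disj)
next
  case (Next a)
  then have ha: "(val a (suffix 1 \<pi>) > 0 \<longrightarrow> models (suffix 1 \<pi>) (pos a)) \<and> (val a (suffix 1 \<pi>) < 1 \<longrightarrow> models (suffix 1 \<pi>) (lt1 a)) \<and>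
    (fs (suffix 1 \<pi>) \<longrightarrow> (models (suffix 1 \<pi>) (pos a) \<longrightarrow> val a (suffix 1 \<pi>) > 0) \<and> (models (suffix 1 \<pi>) (lt1 a) \<longrightarrow> val a (suffix 1 \<pi>) < 1))"
    by simp
  then show ?case using fs_suffix[of \<pi> 1] by (simp add: models_Next)
next
  case (Until a b)
  have oka: "\<forall>\<eta>\<in>disc_funs a. discounting \<eta>" and okb: "\<forall>\<eta>\<in>disc_funs b. discounting \<eta>"
    using Until.prems by auto
  note IHa = Until.IH(1)[OF oka] and IHb = Until.IH(2)[OF okb]
  have Ar: "\<And>j. 0 \<le> val a (suffix j \<pi>) \<and> val a (suffix j \<pi>) \<le> 1" using val_range[OF oka] by blast
  have Br: "\<And>j. 0 \<le> val b (suffix j \<pi>) \<and> val b (suffix j \<pi>) \<le> 1" using val_range[OF okb] by blast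
  let ?t = "\<lambda>i. min (val b (suffix i \<pi>)) (min_below i (\<lambda>j. val a (suffix j \<pi>)))"
  have tb: "\<And>i. 0 \<le> ?t i \<and> ?t i \<le> 1" using Ar Br by (auto intro!: mb_ge0 simp: min_le_iff_disj)
  have vdef: "val (Until a b) \<pi> = (SUP i. ?t i)" by simp
  have up: "\<And>i. ?t i \<le> val (Until a b) \<pi>" unfolding vdef by (rule sup_upper[of _ 1]) (use tb in auto)
  have v1: "val (Until a b) \<pi> \<le> 1" unfolding vdef by (rule sup_least) (use tb in auto)
  have tpos: "\<And>i. ?t i > 0 \<longleftrightarrow> val b (suffix i \<pi>) > 0 \<and> (\<forall>j<i. val a (suffix j \<pi>) > 0)"
    by (simp add: mb_pos)
  have t1: "\<And>i. ?t i = 1 \<longleftrightarrow> val b (suffix i \<pi>) = 1 \<and> (\<forall>j<i. val a (suffix j \<pi>) = 1)"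
  proof -
    fix i
    have ale: "\<And>j. val a (suffix j \<pi>) \<le> 1" using Ar by blast
    have "?t i = 1 \<longleftrightarrow> val b (suffix i \<pi>) = 1 \<and> min_below i (\<lambda>j. val a (suffix j \<pi>)) = 1"
      using Br[of i] mb_le1[of i "\<lambda>j. val a (suffix j \<pi>)"] by (auto simp: min_def)
    also have "\<dots> \<longleftrightarrow> val b (suffix i \<pi>) = 1 \<and> (\<forall>j<i. val a (suffix j \<pi>) = 1)"
      using mb_one[of "\<lambda>j. val a (suffix j \<pi>)" i, OF ale] by simp
    finally show "?t i = 1 \<longleftrightarrow> val b (suffix i \<pi>) = 1 \<and> (\<forall>j<i. val a (suffix j \<pi>) = 1)" .
  qed
  have mp: "models \<pi> (pos (Until a b)) \<longleftrightarrow>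
     (\<exists>i. models (suffix i \<pi>) (pos b) \<and> (\<forall>j<i. models (suffix j \<pi>) (pos a)))"
    by (simp add: models_Until)
  have ml: "models \<pi> (lt1 (Until a b)) \<longleftrightarrow>
     \<not> (\<exists>i. \<not> models (suffix i \<pi>) (lt1 b) \<and> (\<forall>j<i. \<not> models (suffix j \<pi>) (lt1 a)))"
    by (simp add: models_Until models_Neg is_ltl_def ltl_pos)
  have c1: "val (Until a b) \<pi> > 0 \<longrightarrow> models \<pi> (pos (Until a b))"
  proof
    assume h: "val (Until a b) \<pi> > 0"
    have "\<exists>i. ?t i > 0"
    proof (rule ccontr)
      assume "\<not> (\<exists>i. ?t i > 0)"
      then have "\<And>i. ?t i \<le> 0" using leI by blast
      then have "(SUP i. ?t i) \<le> 0" by (rule sup_least)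
      then show False using h vdef by simp
    qed
    then obtain i where "?t i > 0" by blast
    then have "val b (suffix i \<pi>) > 0" "\<forall>j<i. val a (suffix j \<pi>) > 0" using tpos by blast+
    then show "models \<pi> (pos (Until a b))" unfolding mp using IHa IHb by blast
  qed
  have c2: "val (Until a b) \<pi> < 1 \<longrightarrow> models \<pi> (lt1 (Until a b))"
  proof
    assume h: "val (Until a b) \<pi> < 1"
    show "models \<pi> (lt1 (Until a b))" unfolding ml
    proof
      assume "\<exists>i. \<not> models (suffix i \<pi>) (lt1 b) \<and> (\<forall>j<i. \<not> models (suffix j \<pi>) (lt1 a))"
      then obtain i where i: "\<not> models (suffix i \<pi>) (lt1 b)" "\<forall>j<i. \<not> models (suffix j \<pi>) (lt1 a)" by blast
      have "val b (suffix i \<pi>) = 1" using i(1) IHb[of "suffix i \<pi>"] Br[of i] by force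
      moreover have "\<forall>j<i. val a (suffix j \<pi>) = 1"
      proof (intro allI impI)
        fix j assume "j < i"
        then show "val a (suffix j \<pi>) = 1" using i(2) IHa[of "suffix j \<pi>"] Ar[of j] by force
      qed
      ultimately have "?t i = 1" using t1 by blast
      then show False using up[of i] h by simp
    qed
  qed
  have c3: "fs \<pi> \<longrightarrow> (models \<pi> (pos (Until a b)) \<longrightarrow> val (Until a b) \<pi> > 0)"
  proof (intro impI)
    assume f: "fs \<pi>" and "models \<pi> (pos (Until a b))"
    then obtain i where i: "models (suffix i \<pi>) (pos b)" "\<forall>j<i. models (suffix j \<pi>) (pos a)"
      unfolding mp by blast
    have "val b (suffix i \<pi>) > 0" using i(1) IHb[of "suffix i \<pi>"] fs_suffix[OF f] by blast
    moreover have "\<forall>j<i. val a (suffix j \<pi>) > 0" using i(2) IHa fs_suffix[OF f] by blast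
    ultimately have "?t i > 0" using tpos by blast
    then show "val (Until a b) \<pi> > 0" using up[of i] by linarith
  qed
  have c4: "fs \<pi> \<longrightarrow> (models \<pi> (lt1 (Until a b)) \<longrightarrow> val (Until a b) \<pi> < 1)"
  proof (intro impI)
    assume f: "fs \<pi>" and m: "models \<pi> (lt1 (Until a b))"
    show "val (Until a b) \<pi> < 1"
    proof (rule ccontr)
      assume "\<not> val (Until a b) \<pi> < 1"
      then have v: "val (Until a b) \<pi> = 1" using v1 by linarith
      obtain i0 where i0: "(SUP i. ?t i) = ?t i0"
        using sup_attained[OF fin_terms[OF f]] by blast
      then have "?t i0 = 1" using v vdef by simp
      then have b1: "val b (suffix i0 \<pi>) = 1" and a1: "\<forall>j<i0. val a (suffix j \<pi>) = 1" using t1 by blast+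
      have "\<not> models (suffix i0 \<pi>) (lt1 b)" using b1 IHb[of "suffix i0 \<pi>"] fs_suffix[OF f] by force
      moreover have "\<forall>j<i0. \<not> models (suffix j \<pi>) (lt1 a)"
      proof (intro allI impI)
        fix j assume "j < i0"
        then show "\<not> models (suffix j \<pi>) (lt1 a)" using a1 IHa[of "suffix j \<pi>"] fs_suffix[OF f] by force
      qed
      ultimately show False using m unfolding ml by blast
    qed
  qed
  show ?case using c1 c2 c3 c4 by blast
next
  case (UntilD \<eta> a b)
  have d: "discounting \<eta>" and oka: "\<forall>\<eta>\<in>disc_funs a. discounting \<eta>" and okb: "\<forall>\<eta>\<in>disc_funs b. discounting \<eta>"
    using UntilD.prems by auto
  note IHa = UntilD.IH(1)[OF oka] and IHb = UntilD.IH(2)[OF okb]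
  have ep: "\<And>i. 0 < \<eta> i" using disc_pos[OF d] .
  have e1: "\<And>i. \<eta> i \<le> 1" using disc_le1[OF d] .
  have e10: "\<eta> 1 < \<eta> 0" using disc_01[OF d] .
  have em: "\<And>i. 1 \<le> i \<Longrightarrow> \<eta> i \<le> \<eta> 1" using disc_mono[OF d] by blast
  have Ar: "\<And>j. 0 \<le> val a (suffix j \<pi>) \<and> val a (suffix j \<pi>) \<le> 1" using val_range[OF oka] by blast
  have Br: "\<And>j. 0 \<le> val b (suffix j \<pi>) \<and> val b (suffix j \<pi>) \<le> 1" using val_range[OF okb] by blast
  let ?t = "\<lambda>i. min (\<eta> i * val b (suffix i \<pi>)) (min_below i (\<lambda>j. \<eta> j * val a (suffix j \<pi>)))"
  have prodb: "\<And>i. 0 \<le> \<eta> i * val b (suffix i \<pi>) \<and> \<eta> i * val b (suffix i \<pi>) \<le> \<eta> i"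
    using Br ep by (simp add: mult_left_le less_imp_le)
  have proda: "\<And>j. 0 \<le> \<eta> j * val a (suffix j \<pi>)"
    using Ar ep by (simp add: less_imp_le)
  have tb: "\<And>i. 0 \<le> ?t i \<and> ?t i \<le> 1"
  proof -
    fix i
    have "0 \<le> min_below i (\<lambda>j. \<eta> j * val a (suffix j \<pi>))" by (rule mb_ge0) (use proda in blast)
    then show "0 \<le> ?t i \<and> ?t i \<le> 1" using prodb[of i] e1[of i] by (auto simp: min_le_iff_disj)
  qed
  have vdef: "val (UntilD \<eta> a b) \<pi> = (SUP i. ?t i)" by simp
  have up: "\<And>i. ?t i \<le> val (UntilD \<eta> a b) \<pi>" unfolding vdef by (rule sup_upper[of _ 1]) (use tb in auto)
  have tpos: "\<And>i. ?t i > 0 \<longleftrightarrow> val b (suffix i \<pi>) > 0 \<and> (\<forall>j<i. val a (suffix j \<pi>) > 0)"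
  proof -
    have mp0: "\<And>i x. 0 < \<eta> i * x \<longleftrightarrow> 0 < x"
      using ep by (metis less_asym zero_less_mult_iff)
    fix i show "?t i > 0 \<longleftrightarrow> val b (suffix i \<pi>) > 0 \<and> (\<forall>j<i. val a (suffix j \<pi>) > 0)"
      by (simp add: mb_pos mp0)
  qed
  have mp: "models \<pi> (pos (UntilD \<eta> a b)) \<longleftrightarrow>
     (\<exists>i. models (suffix i \<pi>) (pos b) \<and> (\<forall>j<i. models (suffix j \<pi>) (pos a)))"
    by (simp add: models_Until)
  have c1: "val (UntilD \<eta> a b) \<pi> > 0 \<longrightarrow> models \<pi> (pos (UntilD \<eta> a b))"
  proof
    assume h: "val (UntilD \<eta> a b) \<pi> > 0"
    have "\<exists>i. ?t i > 0"
    proof (rule ccontr)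
      assume "\<not> (\<exists>i. ?t i > 0)"
      then have "\<And>i. ?t i \<le> 0" using leI by blast
      then have "(SUP i. ?t i) \<le> 0" by (rule sup_least)
      then show False using h vdef by simp
    qed
    then obtain i where "?t i > 0" by blast
    then have "val b (suffix i \<pi>) > 0" "\<forall>j<i. val a (suffix j \<pi>) > 0" using tpos by blast+
    then show "models \<pi> (pos (UntilD \<eta> a b))" unfolding mp using IHa IHb by blast
  qed
  have c3: "fs \<pi> \<longrightarrow> (models \<pi> (pos (UntilD \<eta> a b)) \<longrightarrow> val (UntilD \<eta> a b) \<pi> > 0)"
  proof (intro impI)
    assume f: "fs \<pi>" and "models \<pi> (pos (UntilD \<eta> a b))"
    then obtain i where i: "models (suffix i \<pi>) (pos b)" "\<forall>j<i. models (suffix j \<pi>) (pos a)"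
      unfolding mp by blast
    have "val b (suffix i \<pi>) > 0" using i(1) IHb[of "suffix i \<pi>"] fs_suffix[OF f] by blast
    moreover have "\<forall>j<i. val a (suffix j \<pi>) > 0" using i(2) IHa fs_suffix[OF f] by blast
    ultimately have "?t i > 0" using tpos by blast
    then show "val (UntilD \<eta> a b) \<pi> > 0" using up[of i] by linarith
  qed
  have t0: "?t 0 = \<eta> 0 * val b \<pi>" using prodb[of 0] e1[of 0] by simp
  have lo: "\<eta> 0 * val b \<pi> \<le> val (UntilD \<eta> a b) \<pi>" using up[of 0] t0 by simp
  have hi: "val (UntilD \<eta> a b) \<pi> \<le> max (\<eta> 0 * val b \<pi>) (\<eta> 1)"
    unfolding vdef
  proof (rule cSUP_least)
    fix i
    show "?t i \<le> max (\<eta> 0 * val b \<pi>) (\<eta> 1)"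
    proof (cases i)
      case 0 then show ?thesis using t0 by simp
    next
      case (Suc k)
      then have "\<eta> i \<le> \<eta> 1" using em by simp
      then have "?t i \<le> \<eta> 1" using prodb[of i] by (simp add: min_le_iff_disj)
      then show ?thesis by simp
    qed
  qed simp
  have hb: "(val b \<pi> < 1 \<longrightarrow> models \<pi> (lt1 b)) \<and> (fs \<pi> \<longrightarrow> (models \<pi> (lt1 b) \<longrightarrow> val b \<pi> < 1))"
    using IHb[of \<pi>] by simp
  have c24: "(val (UntilD \<eta> a b) \<pi> < 1 \<longrightarrow> models \<pi> (lt1 (UntilD \<eta> a b))) \<and>
     (fs \<pi> \<longrightarrow> (models \<pi> (lt1 (UntilD \<eta> a b)) \<longrightarrow> val (UntilD \<eta> a b) \<pi> < 1))"
  proof (cases "\<eta> 0 = 1")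
    case True
    have lo': "val b \<pi> \<le> val (UntilD \<eta> a b) \<pi>" using lo True by simp
    have hi': "val (UntilD \<eta> a b) \<pi> \<le> max (val b \<pi>) (\<eta> 1)" using hi True by simp
    have "val (UntilD \<eta> a b) \<pi> < 1 \<longleftrightarrow> val b \<pi> < 1"
    proof
      assume "val (UntilD \<eta> a b) \<pi> < 1" then show "val b \<pi> < 1" using lo' by (rule le_less_trans[rotated])
    next
      assume "val b \<pi> < 1"
      then have "max (val b \<pi>) (\<eta> 1) < 1" using e10 True by (simp add: max_less_iff_conj)
      then show "val (UntilD \<eta> a b) \<pi> < 1" using hi' by (rule le_less_trans[rotated])
    qed
    then show ?thesis using True hb by simp
  next
    case False
    have "\<eta> 0 < 1" using False e1[of 0] by simp
    moreover have "\<eta> 0 * val b \<pi> \<le> \<eta> 0" using prodb[of 0] by simp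
    ultimately have "max (\<eta> 0 * val b \<pi>) (\<eta> 1) < 1" using e10 by (simp add: max_less_iff_conj)
    then have "val (UntilD \<eta> a b) \<pi> < 1" using hi by (rule le_less_trans[rotated])
    then show ?thesis using False by simp
  qed
  show ?case using c1 c3 c24 by blast
qed


lemma lasso_fs: "lasso \<pi> \<Longrightarrow> fs \<pi>"
proof -
  assume "lasso \<pi>"
  then obtain u v where v: "v \<noteq> []" and pe: "\<And>n. \<pi> n = (if n < length u then u ! n else v ! ((n - length u) mod length v))"
    unfolding lasso_def by blast
  define n where "n = length u"
  define p where "p = length v"
  have pp: "p > 0" using v p_def by simp
  have pe': "\<pi> m = v ! ((m - n) mod p)" if "n \<le> m" for m
  proof -
    have "\<not> m < length u" using that n_def by simp
    then show ?thesis using pe[of m] n_def p_def by presburger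
  qed
  have key: "suffix i \<pi> = suffix (n + (i - n) mod p) \<pi>" if i: "n \<le> i" for i
  proof
    fix k
    have e1: "suffix i \<pi> k = v ! ((i + k - n) mod p)" unfolding suffix_def by (rule pe') (use i in linarith)
    have e2: "suffix (n + (i - n) mod p) \<pi> k = v ! ((n + (i - n) mod p + k - n) mod p)"
      unfolding suffix_def by (rule pe') linarith
    have e3: "n + (i - n) mod p + k - n = (i - n) mod p + k" by linarith
    have e4: "i + k - n = (i - n) + k" using i by linarith
    have e5: "((i - n) mod p + k) mod p = ((i - n) + k) mod p" by (rule mod_add_left_eq)
    show "suffix i \<pi> k = suffix (n + (i - n) mod p) \<pi> k"
      unfolding e1 e2 e3 e4 e5 ..
  qed
  have "range (\<lambda>i. suffix i \<pi>) \<subseteq> (\<lambda>i. suffix i \<pi>) ` {..<n + p}"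
  proof
    fix z assume "z \<in> range (\<lambda>i. suffix i \<pi>)"
    then obtain i where z: "z = suffix i \<pi>" by blast
    show "z \<in> (\<lambda>i. suffix i \<pi>) ` {..<n + p}"
    proof (cases "i < n")
      case True then show ?thesis using z by auto
    next
      case False
      then have "z = suffix (n + (i - n) mod p) \<pi>" using key[of i] z by simp
      moreover have "n + (i - n) mod p < n + p" using pp by simp
      ultimately show ?thesis by blast
    qed
  qed
  then show "fs \<pi>" unfolding fs_def by (rule finite_subset) simp
qed

theorem lemma1:
  shows "\<exists>c::nat. \<forall>(D :: (nat \<Rightarrow> real) set) (\<phi> :: ('a::finite) ltld).
     (\<forall>\<eta>\<in>D. discounting \<eta>) \<longrightarrow> is_ltld_over D \<phi> \<longrightarrow>
     (\<exists>\<phi>pos \<phi>lt1. is_ltl \<phi>pos \<and> is_ltl \<phi>lt1 \<and>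
        fsize \<phi>pos \<le> c * fsize \<phi> \<and> fsize \<phi>lt1 \<le> c * fsize \<phi> \<and>
        (\<forall>\<pi>. (val \<phi> \<pi> > 0 \<longrightarrow> models \<pi> \<phi>pos) \<and> (val \<phi> \<pi> < 1 \<longrightarrow> models \<pi> \<phi>lt1)) \<and>
        (\<forall>\<pi>. lasso \<pi> \<longrightarrow> (models \<pi> \<phi>pos \<longrightarrow> val \<phi> \<pi> > 0) \<and> (models \<pi> \<phi>lt1 \<longrightarrow> val \<phi> \<pi> < 1)))"
proof (intro exI[of _ 6] allI impI)
  fix D :: "(nat \<Rightarrow> real) set" and \<phi> :: "'a ltld"
  assume hD: "\<forall>\<eta>\<in>D. discounting \<eta>" and h\<phi>: "is_ltld_over D \<phi>"
  have ok: "\<forall>\<eta>\<in>disc_funs \<phi>. discounting \<eta>" using hD h\<phi> unfolding is_ltld_over_def by blast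
  have A: "is_ltl (pos \<phi>) \<and> is_ltl (lt1 \<phi>)" by simp
  have B: "fsize (pos \<phi>) \<le> 6 * fsize \<phi> \<and> fsize (lt1 \<phi>) \<le> 6 * fsize \<phi>" using size_pos by blast
  have C: "\<forall>\<pi>. (val \<phi> \<pi> > 0 \<longrightarrow> models \<pi> (pos \<phi>)) \<and> (val \<phi> \<pi> < 1 \<longrightarrow> models \<pi> (lt1 \<phi>))"
    using main[OF ok] by blast
  have E: "\<forall>\<pi>. lasso \<pi> \<longrightarrow> (models \<pi> (pos \<phi>) \<longrightarrow> val \<phi> \<pi> > 0) \<and> (models \<pi> (lt1 \<phi>) \<longrightarrow> val \<phi> \<pi> < 1)"
    using main[OF ok] lasso_fs by blast
  show "\<exists>\<phi>pos \<phi>lt1. is_ltl \<phi>pos \<and> is_ltl \<phi>lt1 \<and>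
        fsize \<phi>pos \<le> 6 * fsize \<phi> \<and> fsize \<phi>lt1 \<le> 6 * fsize \<phi> \<and>
        (\<forall>\<pi>. (val \<phi> \<pi> > 0 \<longrightarrow> models \<pi> \<phi>pos) \<and> (val \<phi> \<pi> < 1 \<longrightarrow> models \<pi> \<phi>lt1)) \<and>
        (\<forall>\<pi>. lasso \<pi> \<longrightarrow> (models \<pi> \<phi>pos \<longrightarrow> val \<phi> \<pi> > 0) \<and> (models \<pi> \<phi>lt1 \<longrightarrow> val \<phi> \<pi> < 1))"
    using A B C E by blast
qed

end
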